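(* Let $\mathbb M=(M,d)$ be an unbounded metric space whose group of isometries $\mathrm{Aut}(\mathbb M)$ acts transitively on $M$. Suppose that for some $t\in\mathbb{R}_+^*$ the set $\mathrm{spec}(\mathbb M)\cap[t,+\infty)$ is uncountable and every bounded subspace of $\mathbb M$ is $t$-totally bounded. Then $$\mathrm{age}_t(\mathbb M):=\{\text{isometry type of }\mathbb M_{\restriction X}: X\subseteq M\text{ finite},\ d(\mathbb M_{\restriction X})\ge t\}$$ is an ideal contained in $\mathrm{age}(\mathbb M)$ which is not representable.
   Context: For a metric space $\mathbb M=(M,d)$: $\mathrm{spec}(\mathbb M)=\{d(x,y):x,y\in M\}$; $d(\mathbb M):=\inf(\mathrm{spec}(\mathbb M)\setminus\{0\})$, with $d(\mathbb M)=+\infty$ if $|M|\le 1$; $\mathbb M_{\restriction X}$ is the subspace on $X$. $\omega_t(\mathbb M):=\sup\{|X|:X\subseteq M,\ d(\mathbb M_{\restriction X})\ge t\}$, and $\mathbb M$ is $t$-totally bounded if $\omega_t(\mathbb M)$ is finite. Finite metric spaces are considered up to isometry and ordered by isometric embeddability; $\mathrm{age}(\mathbb M)$ is the set of isometry types of finite subspaces of $\mathbb M$. An ideal is a non-empty, downward closed, up-directed set of such isometry types; it is representable if it equals $\mathrm{age}(\mathbb M')$ for some metric space $\mathbb M'$. *)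

theory Defs
  imports "HOL-Analysis.Analysis" "HOL-Library.Countable_Set"
begin

text \<open>The minimal distance of a subspace X: inf of nonzero distances, +infinity if card X \<le> 1.\<close>
definition mindist :: "'a set \<Rightarrow> ('a \<Rightarrow> 'a \<Rightarrow> real) \<Rightarrow> ereal" where
  "mindist X d = Inf {ereal (d x y) | x y. x \<in> X \<and> y \<in> X \<and> x \<noteq> y}"

definition spec :: "'a set \<Rightarrow> ('a \<Rightarrow> 'a \<Rightarrow> real) \<Rightarrow> real set" where
  "spec M d = {d x y | x y. x \<in> M \<and> y \<in> M}"

definition omega_t :: "'a set \<Rightarrow> ('a \<Rightarrow> 'a \<Rightarrow> real) \<Rightarrow> real \<Rightarrow> enat" where
  "omega_t M d t = (SUP X \<in> {X. X \<subseteq> M \<and> mindist X d \<ge> ereal t}.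
                     (if finite X then enat (card X) else \<infinity>))"

definition t_totally_bounded :: "'a set \<Rightarrow> ('a \<Rightarrow> 'a \<Rightarrow> real) \<Rightarrow> real \<Rightarrow> bool" where
  "t_totally_bounded M d t \<longleftrightarrow> omega_t M d t \<noteq> \<infinity>"

definition isometry_on :: "'a set \<Rightarrow> ('a \<Rightarrow> 'a \<Rightarrow> real) \<Rightarrow> ('a \<Rightarrow> 'a) \<Rightarrow> bool" where
  "isometry_on M d f \<longleftrightarrow> bij_betw f M M \<and> (\<forall>x\<in>M. \<forall>y\<in>M. d (f x) (f y) = d x y)"

definition aut_transitive :: "'a set \<Rightarrow> ('a \<Rightarrow> 'a \<Rightarrow> real) \<Rightarrow> bool" where
  "aut_transitive M d \<longleftrightarrow> (\<forall>x\<in>M. \<forall>y\<in>M. \<exists>f. isometry_on M d f \<and> f x = y)"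

text \<open>Isometry types of finite metric spaces: the set of all isometric copies on finite
  subsets of nat (values of the distance outside the carrier are irrelevant).\<close>
type_synonym fmrep = "nat set \<times> (nat \<Rightarrow> nat \<Rightarrow> real)"

definition iso_type :: "'a set \<Rightarrow> ('a \<Rightarrow> 'a \<Rightarrow> real) \<Rightarrow> fmrep set" where
  "iso_type X d = {(A, D). finite A \<and>
      (\<exists>f. bij_betw f A X \<and> (\<forall>x\<in>A. \<forall>y\<in>A. D x y = d (f x) (f y)))}"

definition is_fm_type :: "fmrep set \<Rightarrow> bool" where
  "is_fm_type \<tau> \<longleftrightarrow> (\<exists>(A::nat set) D. finite A \<and> Metric_space A D \<and> \<tau> = iso_type A D)"

definition fm_embeds :: "fmrep set \<Rightarrow> fmrep set \<Rightarrow> bool" where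
  "fm_embeds \<sigma> \<tau> \<longleftrightarrow> (\<exists>(A, D)\<in>\<sigma>. \<exists>(B, E)\<in>\<tau>. \<exists>f. inj_on f A \<and> f ` A \<subseteq> B \<and>
      (\<forall>x\<in>A. \<forall>y\<in>A. E (f x) (f y) = D x y))"

definition age :: "'a set \<Rightarrow> ('a \<Rightarrow> 'a \<Rightarrow> real) \<Rightarrow> fmrep set set" where
  "age M d = {iso_type X d | X. X \<subseteq> M \<and> finite X}"

definition age_t :: "'a set \<Rightarrow> ('a \<Rightarrow> 'a \<Rightarrow> real) \<Rightarrow> real \<Rightarrow> fmrep set set" where
  "age_t M d t = {iso_type X d | X. X \<subseteq> M \<and> finite X \<and> mindist X d \<ge> ereal t}"

definition is_ideal :: "fmrep set set \<Rightarrow> bool" where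
  "is_ideal I \<longleftrightarrow> I \<noteq> {} \<and> (\<forall>\<tau>\<in>I. is_fm_type \<tau>) \<and>
     (\<forall>\<tau>\<in>I. \<forall>\<sigma>. is_fm_type \<sigma> \<and> fm_embeds \<sigma> \<tau> \<longrightarrow> \<sigma> \<in> I) \<and>
     (\<forall>\<tau>\<in>I. \<forall>\<sigma>\<in>I. \<exists>\<rho>\<in>I. fm_embeds \<tau> \<rho> \<and> fm_embeds \<sigma> \<rho>)"

definition representable :: "'b itself \<Rightarrow> fmrep set set \<Rightarrow> bool" where
  "representable _ I \<longleftrightarrow> (\<exists>(M'::'b set) d'. Metric_space M' d' \<and> I = age M' d')"

end

theory Submission
  imports Defs
begin

lemma mindist_ge_iff:
  "mindist X d \<ge> ereal t \<longleftrightarrow> (\<forall>x\<in>X. \<forall>y\<in>X. x \<noteq> y \<longrightarrow> t \<le> d x y)"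
  unfolding mindist_def by (auto simp: le_Inf_iff) (metis ereal_less_eq(3))

lemma iso_type_eq:
  assumes "bij_betw h A X" "\<forall>x\<in>A. \<forall>y\<in>A. D x y = d (h x) (h y)"
  shows "iso_type A D = iso_type X d"
proof
  show "iso_type A D \<subseteq> iso_type X d"
  proof
    fix p assume "p \<in> iso_type A D"
    then obtain B E g where p: "p = (B,E)" "finite B" "bij_betw g B A" "\<forall>x\<in>B. \<forall>y\<in>B. E x y = D (g x) (g y)"
      unfolding iso_type_def by auto
    have "bij_betw (h \<circ> g) B X" using p(3) assms(1) bij_betw_trans by blast
    moreover have "\<forall>x\<in>B. \<forall>y\<in>B. E x y = d ((h \<circ> g) x) ((h \<circ> g) y)"
      using p(3,4) assms(2) bij_betwE by fastforce
    ultimately show "p \<in> iso_type X d" using p unfolding iso_type_def by blast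
  qed
next
  show "iso_type X d \<subseteq> iso_type A D"
  proof
    fix p assume "p \<in> iso_type X d"
    then obtain B E g where p: "p = (B,E)" "finite B" "bij_betw g B X" "\<forall>x\<in>B. \<forall>y\<in>B. E x y = d (g x) (g y)"
      unfolding iso_type_def by auto
    let ?k = "inv_into A h"
    have bk: "bij_betw ?k X A" using assms(1) bij_betw_inv_into by blast
    have "bij_betw (?k \<circ> g) B A" using p(3) bk bij_betw_trans by blast
    moreover have "\<forall>x\<in>B. \<forall>y\<in>B. E x y = D ((?k \<circ> g) x) ((?k \<circ> g) y)"
    proof (intro ballI)
      fix x y assume xy: "x \<in> B" "y \<in> B"
      have gx: "g x \<in> X" "g y \<in> X" using xy p(3) bij_betwE by blast+
      have "h (?k (g x)) = g x" "h (?k (g y)) = g y"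
        using gx assms(1) by (meson bij_betw_inv_into_right)+
      moreover have "?k (g x) \<in> A" "?k (g y) \<in> A" using gx bk bij_betwE by blast+
      ultimately show "E x y = D ((?k \<circ> g) x) ((?k \<circ> g) y)"
        using assms(2) p(4) xy by simp
    qed
    ultimately show "p \<in> iso_type A D" using p unfolding iso_type_def by blast
  qed
qed

lemma iso_type_inv:
  assumes "iso_type X d = iso_type Y e" "finite X"
  shows "\<exists>h. bij_betw h X Y \<and> (\<forall>x\<in>X. \<forall>y\<in>X. e (h x) (h y) = d x y)"
proof -
  obtain f where f: "bij_betw f {0..<card X} X" using ex_bij_betw_nat_finite assms(2) by blast
  have "({0..<card X}, \<lambda>i j. d (f i) (f j)) \<in> iso_type X d"
    unfolding iso_type_def using f by auto
  then obtain g where g: "bij_betw g {0..<card X} Y"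
      "\<forall>i\<in>{0..<card X}. \<forall>j\<in>{0..<card X}. d (f i) (f j) = e (g i) (g j)"
    using assms(1) unfolding iso_type_def by auto
  let ?k = "inv_into {0..<card X} f"
  have bk: "bij_betw ?k X {0..<card X}" using f bij_betw_inv_into by blast
  have "bij_betw (g \<circ> ?k) X Y" using bk g(1) bij_betw_trans by blast
  moreover have "\<forall>x\<in>X. \<forall>y\<in>X. e ((g \<circ> ?k) x) ((g \<circ> ?k) y) = d x y"
  proof (intro ballI)
    fix x y assume xy: "x \<in> X" "y \<in> X"
    have "f (?k x) = x" "f (?k y) = y" using xy f by (meson bij_betw_inv_into_right)+
    moreover have "?k x \<in> {0..<card X}" "?k y \<in> {0..<card X}" using xy bk bij_betwE by blast+
    ultimately show "e ((g \<circ> ?k) x) ((g \<circ> ?k) y) = d x y" using g(2) by force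
  qed
  ultimately show ?thesis by blast
qed

lemma fm_type_of:
  assumes "Metric_space M d" "X \<subseteq> M" "finite X"
  shows "is_fm_type (iso_type X d)"
proof -
  obtain f where f: "bij_betw f {0..<card X} X" using ex_bij_betw_nat_finite assms(3) by blast
  let ?D = "\<lambda>i j. d (f i) (f j)"
  have "iso_type {0..<card X} ?D = iso_type X d" using iso_type_eq[OF f] by simp
  moreover have "Metric_space {0..<card X} ?D"
  proof
    fix x y z
    show "0 \<le> ?D x y" using Metric_space.nonneg[OF assms(1)] by blast
    show "?D x y = ?D y x" using Metric_space.commute[OF assms(1)] by metis
    assume "x \<in> {0..<card X}" "y \<in> {0..<card X}"
    then have "f x \<in> M" "f y \<in> M" "x = y \<longleftrightarrow> f x = f y"
      using f assms(2) bij_betwE bij_betw_imp_inj_on inj_on_eq_iff by (metis subsetD)+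
    then show "?D x y = 0 \<longleftrightarrow> x = y" using Metric_space.zero[OF assms(1)] by metis
    assume "z \<in> {0..<card X}"
    then have "f z \<in> M" using f assms(2) bij_betwE by blast
    then show "?D x z \<le> ?D x y + ?D y z" using Metric_space.triangle[OF assms(1)]
        \<open>f x \<in> M\<close> \<open>f y \<in> M\<close> by metis
  qed
  ultimately show ?thesis unfolding is_fm_type_def by (metis finite_atLeastLessThan)
qed

lemma fm_embeds_subset:
  assumes "X \<subseteq> Z" "finite Z"
  shows "fm_embeds (iso_type X d) (iso_type Z d)"
proof -
  obtain h where h: "bij_betw h {0..<card Z} Z" using ex_bij_betw_nat_finite assms(2) by blast
  let ?A = "{i\<in>{0..<card Z}. h i \<in> X}"
  let ?D = "\<lambda>i j. d (h i) (h j)"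
  have inj: "inj_on h ?A" using h unfolding bij_betw_def by (rule conjE) (erule inj_on_subset, blast)
  have img: "h ` ?A = X"
  proof
    show "h ` ?A \<subseteq> X" by blast
    show "X \<subseteq> h ` ?A"
    proof
      fix x assume x: "x \<in> X"
      then have "x \<in> h ` {0..<card Z}" using h assms(1) unfolding bij_betw_def by blast
      then obtain i where "i \<in> {0..<card Z}" "x = h i" by blast
      then show "x \<in> h ` ?A" using x by blast
    qed
  qed
  have "bij_betw h ?A X" using inj img by (simp add: bij_betw_def)
  then have mem1: "(?A, ?D) \<in> iso_type X d" unfolding iso_type_def by auto
  have mem2: "({0..<card Z}, ?D) \<in> iso_type Z d" unfolding iso_type_def using h by auto
  show ?thesis unfolding fm_embeds_def
    apply (rule bexI[OF _ mem1])
    apply (simp only: prod.case)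
    apply (rule bexI[OF _ mem2])
    apply (simp only: prod.case)
    apply (rule exI[of _ id])
    by auto
qed

lemma isom_iso_type:
  assumes "isometry_on M d g" "X \<subseteq> M"
  shows "iso_type (g ` X) d = iso_type X d" "bij_betw g X (g ` X)"
    "\<forall>x\<in>X. \<forall>y\<in>X. d (g x) (g y) = d x y"
proof -
  have inj: "inj_on g M" using assms(1) unfolding isometry_on_def bij_betw_def by blast
  show b: "bij_betw g X (g ` X)" using inj_on_subset[OF inj assms(2)] by (simp add: bij_betw_def)
  show i: "\<forall>x\<in>X. \<forall>y\<in>X. d (g x) (g y) = d x y" using assms unfolding isometry_on_def by blast
  have "\<forall>x\<in>X. \<forall>y\<in>X. d x y = d (g x) (g y)" using i by simp
  from iso_type_eq[OF b this] show "iso_type (g ` X) d = iso_type X d" by (rule sym)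
qed

lemma isom_sep:
  assumes "isometry_on M d g" "X \<subseteq> M" "mindist X d \<ge> ereal t"
  shows "mindist (g ` X) d \<ge> ereal t"
proof -
  have inj: "inj_on g M" using assms(1) unfolding isometry_on_def bij_betw_def by blast
  have i: "\<forall>x\<in>X. \<forall>y\<in>X. d (g x) (g y) = d x y" using assms unfolding isometry_on_def by blast
  show ?thesis using assms(3) i inj assms(2) unfolding mindist_ge_iff
    by (auto simp: inj_on_eq_iff subset_iff)
qed

theorem proposition1:
  fixes M :: "'a set" and d :: "'a \<Rightarrow> 'a \<Rightarrow> real" and t :: real
  assumes "Metric_space M d"
    and "\<not> Metric_space.mbounded M d M"
    and "aut_transitive M d"
    and "t > 0"
    and "uncountable (spec M d \<inter> {t..})"
    and "\<forall>Y. Y \<subseteq> M \<and> Metric_space.mbounded M d Y \<longrightarrow> t_totally_bounded Y d t"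
  shows "is_ideal (age_t M d t) \<and> age_t M d t \<subseteq> age M d
         \<and> \<not> representable TYPE('b) (age_t M d t)"
proof -
  interpret Metric_space M d by fact
  have trans: "\<And>x y. x \<in> M \<Longrightarrow> y \<in> M \<Longrightarrow> \<exists>g. isometry_on M d g \<and> g x = y"
    using assms(3) unfolding aut_transitive_def by blast
  have gM: "\<And>g x. isometry_on M d g \<Longrightarrow> x \<in> M \<Longrightarrow> g x \<in> M"
    unfolding isometry_on_def using bij_betwE by blast
  have gd: "\<And>g x y. isometry_on M d g \<Longrightarrow> x \<in> M \<Longrightarrow> y \<in> M \<Longrightarrow> d (g x) (g y) = d x y"
    unfolding isometry_on_def by blast
  have ideal: "is_ideal (age_t M d t)"
    unfolding is_ideal_def
  proof (intro conjI ballI allI impI)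
    have "iso_type {} d \<in> age_t M d t" unfolding age_t_def mindist_ge_iff by auto
    then show "age_t M d t \<noteq> {}" by blast
  next
    fix \<tau> assume "\<tau> \<in> age_t M d t"
    then show "is_fm_type \<tau>" unfolding age_t_def using fm_type_of[OF assms(1)] by blast
  next
    fix \<tau> \<sigma> assume "\<tau> \<in> age_t M d t" and s: "is_fm_type \<sigma> \<and> fm_embeds \<sigma> \<tau>"
    then obtain X where X: "\<tau> = iso_type X d" "X \<subseteq> M" "finite X" "mindist X d \<ge> ereal t"
      unfolding age_t_def by blast
    obtain A :: "nat set" and D where AD: "\<sigma> = iso_type A D" using s unfolding is_fm_type_def by blast
    obtain A1 D1 B E f where e: "(A1, D1) \<in> \<sigma>" "(B, E) \<in> \<tau>" "inj_on f A1" "f ` A1 \<subseteq> B"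
      "\<forall>x\<in>A1. \<forall>y\<in>A1. E (f x) (f y) = D1 x y"
      using s unfolding fm_embeds_def by blast
    obtain g where g: "finite A1" "bij_betw g A1 A" "\<forall>x\<in>A1. \<forall>y\<in>A1. D1 x y = D (g x) (g y)"
      using e(1) AD unfolding iso_type_def by blast
    obtain h where h: "bij_betw h B X" "\<forall>x\<in>B. \<forall>y\<in>B. E x y = d (h x) (h y)"
      using e(2) X(1) unfolding iso_type_def by blast
    have s1: "\<sigma> = iso_type A1 D1" using AD iso_type_eq[OF g(2) g(3)] by simp
    have inj: "inj_on (h \<circ> f) A1"
      using e(3,4) h(1) unfolding bij_betw_def by (metis comp_inj_on inj_on_subset)
    have b: "bij_betw (h \<circ> f) A1 ((h \<circ> f) ` A1)" using inj by (simp add: bij_betw_def)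
    have "\<forall>x\<in>A1. \<forall>y\<in>A1. D1 x y = d ((h \<circ> f) x) ((h \<circ> f) y)"
      using e(4,5) h(2) by (auto simp: subset_iff)
    then have s2: "\<sigma> = iso_type ((h \<circ> f) ` A1) d" using s1 iso_type_eq[OF b] by simp
    have sub: "(h \<circ> f) ` A1 \<subseteq> X" using e(4) h(1) bij_betwE by fastforce
    have "mindist ((h \<circ> f) ` A1) d \<ge> ereal t" using X(4) sub unfolding mindist_ge_iff by blast
    then show "\<sigma> \<in> age_t M d t" unfolding age_t_def using s2 sub X(2) g(1)
      by (metis (mono_tags, lifting) finite_imageI mem_Collect_eq order_trans)
  next
    fix \<tau> \<sigma> assume "\<tau> \<in> age_t M d t" "\<sigma> \<in> age_t M d t"
    then obtain X Y where X: "\<tau> = iso_type X d" "X \<subseteq> M" "finite X" "mindist X d \<ge> ereal t"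
      and Y: "\<sigma> = iso_type Y d" "Y \<subseteq> M" "finite Y" "mindist Y d \<ge> ereal t"
      unfolding age_t_def by blast
    show "\<exists>\<rho>\<in>age_t M d t. fm_embeds \<tau> \<rho> \<and> fm_embeds \<sigma> \<rho>"
    proof (cases "X = {} \<or> Y = {}")
      case True
      then show ?thesis
      proof
        assume "X = {}"
        then show ?thesis using X Y fm_embeds_subset[of X Y d] fm_embeds_subset[of Y Y d]
          unfolding age_t_def by blast
      next
        assume "Y = {}"
        then show ?thesis using X Y fm_embeds_subset[of Y X d] fm_embeds_subset[of X X d]
          unfolding age_t_def by blast
      qed
    next
      case False
      then obtain x0 y0 where x0: "x0 \<in> X" and y0: "y0 \<in> Y" by blast
      define R where "R = (\<Sum>x\<in>X. d x0 x) + (\<Sum>y\<in>Y. d y0 y) + t"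
      have "\<not> M \<subseteq> mcball x0 R" using assms(2) unfolding mbounded_def by blast
      moreover have x0M: "x0 \<in> M" using x0 X(2) by blast
      ultimately obtain z where z0: "z \<in> M" "\<not> d x0 z \<le> R" unfolding subset_iff in_mcball by blast
      then have z: "z \<in> M" "d x0 z > R" by auto
      obtain g where g: "isometry_on M d g" "g y0 = z" using trans y0 Y(2) z(1) by blast
      define Z where "Z = X \<union> g ` Y"
      have gY: "g ` Y \<subseteq> M" using gM g(1) Y(2) by blast
      have cross: "t \<le> d x (g y)" if "x \<in> X" "y \<in> Y" for x y
      proof -
        have m: "x0 \<in> M" "x \<in> M" "y \<in> M" "y0 \<in> M" using that x0 y0 X(2) Y(2) by auto
        have gy: "g y \<in> M" using gM[OF g(1) m(3)] .
        have "d x0 z \<le> d x0 x + d x z" using triangle[OF m(1) m(2) z(1)] .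
        moreover have "d x z \<le> d x (g y) + d (g y) z" using triangle[OF m(2) gy z(1)] .
        ultimately have "d x0 z \<le> d x0 x + d x (g y) + d (g y) z" by linarith
        moreover have "d (g y) z = d y0 y" using gd[OF g(1) m(3) m(4)] g(2) commute by metis
        moreover have "d x0 x \<le> (\<Sum>x\<in>X. d x0 x)" using X(3) that(1) by (intro member_le_sum) auto
        moreover have "d y0 y \<le> (\<Sum>y\<in>Y. d y0 y)" using Y(3) that(2) by (intro member_le_sum) auto
        ultimately show ?thesis using z(2) unfolding R_def by linarith
      qed
      have sepY: "mindist (g ` Y) d \<ge> ereal t" using isom_sep[OF g(1) Y(2) Y(4)] .
      have "mindist Z d \<ge> ereal t"
        unfolding mindist_ge_iff Z_def
      proof (intro ballI impI)
        fix a b assume ab: "a \<in> X \<union> g ` Y" "b \<in> X \<union> g ` Y" "a \<noteq> b"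
        show "t \<le> d a b"
          using ab X(4) sepY cross commute unfolding mindist_ge_iff by auto
      qed
      moreover have "finite Z" "Z \<subseteq> M" unfolding Z_def using X(2,3) Y(3) gY by auto
      ultimately have "iso_type Z d \<in> age_t M d t" unfolding age_t_def by blast
      moreover have "fm_embeds \<tau> (iso_type Z d)" using X fm_embeds_subset[of X Z d] Y(3)
        unfolding Z_def by auto
      moreover have "fm_embeds \<sigma> (iso_type Z d)" using Y fm_embeds_subset[of "g ` Y" Z d] X(3)
          isom_iso_type(1)[OF g(1) Y(2)] unfolding Z_def by auto
      ultimately show ?thesis by blast
    qed
  qed
  have sub: "age_t M d t \<subseteq> age M d" unfolding age_t_def age_def by blast
  have nrep: "\<not> representable TYPE('b) (age_t M d t)"
  proof
    assume "representable TYPE('b) (age_t M d t)"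
    then obtain M' :: "'b set" and d' where M': "Metric_space M' d'" and eq: "age_t M d t = age M' d'"
      unfolding representable_def by blast
    interpret M': Metric_space M' d' by fact
    have "M \<noteq> {}"
    proof
      assume "M = {}"
      then have "mbounded M" using mbounded_empty by simp
      with assms(2) show False by simp
    qed
    then obtain x0 where x0: "x0 \<in> M" by blast
    have bnd: "\<exists>N. \<forall>X. X \<subseteq> mcball x0 R \<and> finite X \<and> mindist X d \<ge> ereal t \<longrightarrow> card X \<le> N" for R
    proof -
      have "t_totally_bounded (mcball x0 R) d t" using assms(6) mbounded_mcball mcball_subset_mspace by blast
      then obtain N where N: "omega_t (mcball x0 R) d t = enat N"
        unfolding t_totally_bounded_def by (cases "omega_t (mcball x0 R) d t") auto
      show ?thesis
      proof (intro exI allI impI)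
        fix X assume X: "X \<subseteq> mcball x0 R \<and> finite X \<and> mindist X d \<ge> ereal t"
        then have "enat (card X) \<le> omega_t (mcball x0 R) d t"
          unfolding omega_t_def by (intro SUP_upper2[of X]) auto
        then show "card X \<le> N" using N by simp
      qed
    qed
    have fin: "finite (M'.mcball x' R)" if x': "x' \<in> M'" and R0: "0 \<le> R" for x' R
    proof -
      obtain N where N: "\<And>X. X \<subseteq> mcball x0 R \<Longrightarrow> finite X \<Longrightarrow> mindist X d \<ge> ereal t \<Longrightarrow> card X \<le> N"
        using bnd by blast
      have "finite (M'.mcball x' R) \<and> card (M'.mcball x' R) \<le> N"
      proof (rule finite_if_finite_subsets_card_bdd)
        fix G assume G: "G \<subseteq> M'.mcball x' R" "finite G"
        define G' where "G' = insert x' G"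
        have G': "G' \<subseteq> M'" "finite G'" using G x' M'.mcball_subset_mspace unfolding G'_def by auto
        have "iso_type G' d' \<in> age_t M d t" unfolding eq age_def using G' by blast
        then obtain X where X: "iso_type G' d' = iso_type X d" "X \<subseteq> M" "finite X" "mindist X d \<ge> ereal t"
          unfolding age_t_def by auto
        obtain k where k: "bij_betw k G' X" "\<forall>a\<in>G'. \<forall>b\<in>G'. d (k a) (k b) = d' a b"
          using iso_type_inv[OF X(1) G'(2)] by blast
        have p: "k x' \<in> X" using k(1) bij_betwE unfolding G'_def by blast
        obtain g where g: "isometry_on M d g" "g (k x') = x0" using trans p X(2) x0 by blast
        have "g ` X \<subseteq> mcball x0 R"
        proof
          fix s assume "s \<in> g ` X"
          then obtain u where u: "u \<in> G'" "s = g (k u)" using k(1) unfolding bij_betw_def by blast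
          have ku: "k u \<in> X" using u(1) k(1) bij_betwE by blast
          have "d x0 s = d (k x') (k u)" using gd[OF g(1)] g(2) u(2) ku p X(2) by blast
          also have "\<dots> = d' x' u" using k(2) u(1) unfolding G'_def by blast
          also have "\<dots> \<le> R" using u(1) G(1) x' R0 unfolding G'_def by auto
          finally show "s \<in> mcball x0 R" using x0 gM[OF g(1)] ku X(2) \<open>s = g (k u)\<close> by auto
        qed
        then have "card (g ` X) \<le> N" using N X(3) isom_sep[OF g(1) X(2) X(4)] by blast
        moreover have "card (g ` X) = card X" using isom_iso_type(2)[OF g(1) X(2)] bij_betw_same_card by metis
        moreover have "card X = card G'" using k(1) bij_betw_same_card by metis
        moreover have "card G \<le> card G'" unfolding G'_def by (simp add: card_insert_le)
        ultimately show "card G \<le> N" by linarith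
      qed
      then show ?thesis by blast
    qed
    have cM': "countable M'"
    proof (cases "M' = {}")
      case False
      then obtain x' where x': "x' \<in> M'" by blast
      have "M' \<subseteq> (\<Union>n::nat. M'.mcball x' (real n))"
      proof
        fix y assume y: "y \<in> M'"
        have "d' x' y \<le> real (nat \<lceil>d' x' y\<rceil>)" by linarith
        then have "y \<in> M'.mcball x' (real (nat \<lceil>d' x' y\<rceil>))" using x' y by simp
        then show "y \<in> (\<Union>n::nat. M'.mcball x' (real n))" by blast
      qed
      moreover have "countable (\<Union>n::nat. M'.mcball x' (real n))"
        using fin[OF x' of_nat_0_le_iff] by (intro countable_UN) (auto intro: countable_finite)
      ultimately show ?thesis using countable_subset by blast
    qed auto
    have "spec M' d' = (\<lambda>(x, y). d' x y) ` (M' \<times> M')" unfolding spec_def by auto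
    then have cs: "countable (spec M' d')" using cM' by simp
    have "spec M d \<inter> {t..} \<subseteq> spec M' d'"
    proof
      fix r assume "r \<in> spec M d \<inter> {t..}"
      then obtain x y where xy: "x \<in> M" "y \<in> M" "r = d x y" "r \<ge> t" unfolding spec_def by auto
      have "x \<noteq> y" using xy assms(4) by auto
      let ?P = "{x, y}"
      have "mindist ?P d \<ge> ereal t" unfolding mindist_ge_iff using xy commute by auto
      then have "iso_type ?P d \<in> age M' d'" unfolding eq[symmetric] age_t_def using xy by auto
      then obtain G where G: "iso_type ?P d = iso_type G d'" "G \<subseteq> M'" unfolding age_def by auto
      obtain k where k: "bij_betw k ?P G" "\<forall>a\<in>?P. \<forall>b\<in>?P. d' (k a) (k b) = d a b"
        using iso_type_inv[OF G(1)] by blast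
      have "k x \<in> M'" "k y \<in> M'" using k(1) G(2) bij_betwE by blast+
      moreover have "r = d' (k x) (k y)" using k(2) xy(3) by simp
      ultimately show "r \<in> spec M' d'" unfolding spec_def by blast
    qed
    then show False using assms(5) cs countable_subset by blast
  qed
  show ?thesis using ideal sub nrep by blast
qed

end
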